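(* Let $r,K,\mu$ satisfy Assumption 1. Let $\mathcal D=(0,1)\times(0,K)$, $Z_w=\{f_w=0\}\cap\mathcal D$, $Z_w^-=\{f_w<0\}\cap\mathcal D$, $Z_m=\{f_m=0\}\cap\mathcal D$, $Z_m^-=\{f_m<0\}\cap\mathcal D$, $\mathcal D_l=\{(w,m)\in\mathcal D: w\le w^*, m\ge m^*\}$ and $\mathcal D_r=\{(w,m)\in\mathcal D: w\ge w^*, m\le m^*\}$. Then $Z_m\cup Z_w\subset\mathcal D_l\cup\mathcal D_r$, $Z_w^-\cap\mathcal D_l\subset Z_m^-$, and $Z_m^-\cap\mathcal D_r\subset Z_w^-$.
   Context: Assumption 1: $r\in(1,\infty)$, $\mu\in\left(0,\min\left(\frac r2,1-\frac1r,1-K,K\right)\right)$, $K\in\left(0,\min\left(1,\frac{r}{r-1}\left(1-\frac{\mu}{1-\mu}\right)\right)\right)$. $f_w(w,m):=w(1-(w+m))+\mu(m-w)$, $f_m(w,m):=rm\left(1-\frac{w+m}{K}\right)+\mu(w-m)$; $(w^*,m^* )$ is the unique solution in $(0,1)\times(0,K)$ of $f_w=f_m=0$. *)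

theory Defs
  imports Complex_Main
begin

definition f_w :: "real \<Rightarrow> real \<Rightarrow> real \<Rightarrow> real" where
  "f_w \<mu> w m = w * (1 - (w + m)) + \<mu> * (m - w)"

definition f_m :: "real \<Rightarrow> real \<Rightarrow> real \<Rightarrow> real \<Rightarrow> real \<Rightarrow> real" where
  "f_m r K \<mu> w m = r * m * (1 - (w + m) / K) + \<mu> * (w - m)"

definition assumption1 :: "real \<Rightarrow> real \<Rightarrow> real \<Rightarrow> bool" where
  "assumption1 r K \<mu> \<longleftrightarrow>
     1 < r \<and>
     0 < \<mu> \<and> \<mu> < min (min (r / 2) (1 - 1 / r)) (min (1 - K) K) \<and>
     0 < K \<and> K < min 1 ((r / (r - 1)) * (1 - \<mu> / (1 - \<mu>)))"

definition dom_D :: "real \<Rightarrow> (real \<times> real) set" where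
  "dom_D K = {0<..<1} \<times> {0<..<K}"

end

theory Submission
  imports Defs
begin

definition gW :: "real \<Rightarrow> real \<Rightarrow> real" where
  "gW \<mu> w = w*(1-\<mu>-w)/(w-\<mu>)"

definition hM :: "real \<Rightarrow> real \<Rightarrow> real \<Rightarrow> real \<Rightarrow> real" where
  "hM r K \<mu> m = m*(r-\<mu>-r*m/K)/(r*m/K-\<mu>)"

lemma L1: "w > \<mu> \<Longrightarrow> f_w \<mu> w m = (w-\<mu>)*(gW \<mu> w - m)"
  unfolding f_w_def gW_def by (simp add: field_simps)

lemma L2: "r*m/K > \<mu> \<Longrightarrow> K > 0 \<Longrightarrow> f_m r K \<mu> w m = (r*m/K-\<mu>)*(hM r K \<mu> m - w)"
  unfolding f_m_def hM_def by (simp add: field_simps)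

lemma L3: assumes "\<mu> < a" "a \<le> b" "0 < \<mu>" "\<mu> < 1/2" shows "gW \<mu> b \<le> gW \<mu> a"
proof -
  have rep: "gW \<mu> w = (1-3*\<mu>) - (w-\<mu>) + \<mu>*(1-2*\<mu>)/(w-\<mu>)" if "w > \<mu>" for w
    using that unfolding gW_def by (simp add: field_simps)
  have "\<mu>*(1-2*\<mu>)/(b-\<mu>) \<le> \<mu>*(1-2*\<mu>)/(a-\<mu>)"
    using assms by (intro divide_left_mono) (auto intro: mult_pos_pos)
  then show ?thesis using rep[of a] rep[of b] assms by simp
qed

lemma L4: assumes "\<mu> < r*a/K" "a \<le> b" "0 < K" "0 < r" "2*\<mu> < r" "0 < \<mu>"
  shows "hM r K \<mu> b \<le> hM r K \<mu> a"
proof -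
  have rep: "hM r K \<mu> m = (K/r)*((r-3*\<mu>) - (r*m/K-\<mu>) + \<mu>*(r-2*\<mu>)/(r*m/K-\<mu>))"
    if "r*m/K > \<mu>" for m
    using that assms unfolding hM_def by (simp add: field_simps)
  have ab: "r*a/K \<le> r*b/K" using assms by (simp add: divide_right_mono)
  have "\<mu>*(r-2*\<mu>)/(r*b/K-\<mu>) \<le> \<mu>*(r-2*\<mu>)/(r*a/K-\<mu>)"
    using assms ab by (intro divide_left_mono) auto
  then have "(r-3*\<mu>) - (r*b/K-\<mu>) + \<mu>*(r-2*\<mu>)/(r*b/K-\<mu>) \<le> (r-3*\<mu>) - (r*a/K-\<mu>) + \<mu>*(r-2*\<mu>)/(r*a/K-\<mu>)"
    using ab by linarith
  then have "(K/r)*((r-3*\<mu>) - (r*b/K-\<mu>) + \<mu>*(r-2*\<mu>)/(r*b/K-\<mu>)) \<le> (K/r)*((r-3*\<mu>) - (r*a/K-\<mu>) + \<mu>*(r-2*\<mu>)/(r*a/K-\<mu>))"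
    using assms by (intro mult_left_mono) auto
  then show ?thesis using rep[of a] rep[of b] assms ab by linarith
qed

lemma L5: assumes "K > 0" "r > 1" "\<mu> < 1" "0 < w" "m \<ge> K" "0 < \<mu>"
  shows "f_m r K \<mu> w m < 0"
proof -
  have e: "f_m r K \<mu> w m = r*m*(1 - m/K) + w*(\<mu> - r*m/K) - \<mu>*m"
    unfolding f_m_def using assms by (simp add: field_simps)
  have "m/K \<ge> 1" using assms by simp
  then have "r*m*(1-m/K) \<le> 0" using assms by (simp add: mult_nonneg_nonpos)
  moreover have "r*(m/K) \<ge> r*1" using \<open>m/K \<ge> 1\<close> assms
    by (intro mult_left_mono) auto
  then have "r*m/K \<ge> r" by simp
  then have "w*(\<mu> - r*m/K) < 0" using assms by (simp add: mult_pos_neg)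
  moreover have "\<mu>*m > 0" using assms by simp
  ultimately show ?thesis using e by linarith
qed

lemma L6: assumes "0 < \<mu>" "w \<ge> 1" "0 < m" "m < 1" shows "f_w \<mu> w m < 0"
proof -
  have "w*(1-w-m) < 0" using assms by (simp add: mult_pos_neg)
  moreover have "\<mu>*(m-w) < 0" using assms by (simp add: mult_pos_neg)
  ultimately show ?thesis unfolding f_w_def by (simp add: algebra_simps)
qed

lemma quad: fixes A B C g m :: real
  assumes "B > 0" "C > 0" "0 < g" "g < m" "A*g - B*g^2 + C \<le> 0"
  shows "A*m - B*m^2 + C < 0"
proof -
  have "(A*g - B*g^2 + C)/g = A - B*g + C/g" using assms by (simp add: field_simps power2_eq_square)
  moreover have "(A*g - B*g^2 + C)/g \<le> 0" using assms by (simp add: divide_nonpos_pos)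
  moreover have "C/m < C/g" using assms by (simp add: divide_strict_left_mono)
  moreover have "B*g < B*m" using assms by simp
  ultimately have "A - B*m + C/m < 0" by linarith
  moreover have "(A*m - B*m^2 + C)/m = A - B*m + C/m" using assms by (simp add: field_simps power2_eq_square)
  ultimately have "(A*m - B*m^2 + C)/m < 0" by simp
  then show ?thesis using assms by (simp add: divide_less_0_iff)
qed

lemma L7: assumes "K > 0" "r > 0" "0 < \<mu>" "0 < w" "0 < g" "g < m" "f_m r K \<mu> w g \<le> 0"
  shows "f_m r K \<mu> w m < 0"
proof -
  have e: "\<And>x. f_m r K \<mu> w x = (r - r*w/K - \<mu>)*x - (r/K)*x^2 + \<mu>*w"
    unfolding f_m_def using assms by (simp add: field_simps power2_eq_square)
  show ?thesis using quad[of "r/K" "\<mu>*w" g m "r - r*w/K - \<mu>"] assms e by simp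
qed

lemma L7': assumes "0 < \<mu>" "0 < m" "0 < h" "h < w" "f_w \<mu> h m \<le> 0"
  shows "f_w \<mu> w m < 0"
proof -
  have e: "\<And>x. f_w \<mu> x m = (1 - m - \<mu>)*x - 1*x^2 + \<mu>*m"
    unfolding f_w_def by (simp add: field_simps power2_eq_square)
  show ?thesis using quad[of 1 "\<mu>*m" h w "1 - m - \<mu>"] assms e by simp
qed

lemma L8: assumes "0 < w" "w \<le> \<mu>" "\<mu> < 1/2" "m > 0" shows "f_w \<mu> w m > 0"
proof -
  have "w*(1-\<mu>-w) > 0" using assms by simp
  moreover have "m*(\<mu>-w) \<ge> 0" using assms by simp
  ultimately show ?thesis unfolding f_w_def by (simp add: algebra_simps)
qed

lemma L9: assumes "0 < m" "r*m/K \<le> \<mu>" "w > 0" "r > 2*\<mu>"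
  shows "f_m r K \<mu> w m > 0"
proof -
  have e: "f_m r K \<mu> w m = w*(\<mu> - r*m/K) + m*(r - r*m/K - \<mu>)"
    unfolding f_m_def by (simp add: algebra_simps add_divide_distrib diff_divide_distrib)
  have "w*(\<mu> - r*m/K) \<ge> 0" using assms by simp
  moreover have "m*(r - r*m/K - \<mu>) > 0" using assms by simp
  ultimately show ?thesis using e by linarith
qed

theorem mainTheorem19:
  fixes r K \<mu> ws ms :: real
  assumes A1: "assumption1 r K \<mu>"
    and star_in: "(ws, ms) \<in> dom_D K"
    and star_w: "f_w \<mu> ws ms = 0" and star_m: "f_m r K \<mu> ws ms = 0"
    and star_unique: "\<And>w m. (w, m) \<in> dom_D K \<Longrightarrow> f_w \<mu> w m = 0 \<Longrightarrow> f_m r K \<mu> w m = 0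
                         \<Longrightarrow> w = ws \<and> m = ms"
  defines "Zw \<equiv> {(w, m). (w, m) \<in> dom_D K \<and> f_w \<mu> w m = 0}"
    and "Zw_neg \<equiv> {(w, m). (w, m) \<in> dom_D K \<and> f_w \<mu> w m < 0}"
    and "Zm \<equiv> {(w, m). (w, m) \<in> dom_D K \<and> f_m r K \<mu> w m = 0}"
    and "Zm_neg \<equiv> {(w, m). (w, m) \<in> dom_D K \<and> f_m r K \<mu> w m < 0}"
    and "Dl \<equiv> {(w, m). (w, m) \<in> dom_D K \<and> w \<le> ws \<and> m \<ge> ms}"
    and "Dr \<equiv> {(w, m). (w, m) \<in> dom_D K \<and> w \<ge> ws \<and> m \<le> ms}"
  shows "Zm \<union> Zw \<subseteq> Dl \<union> Dr \<and> Zw_neg \<inter> Dl \<subseteq> Zm_neg \<and> Zm_neg \<inter> Dr \<subseteq> Zw_neg"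
proof -
  have r1: "1 < r" and mu0: "0 < \<mu>" and mur: "2*\<mu> < r" and muK: "\<mu> < K" and muK1: "\<mu> < 1 - K"
    and K0: "0 < K" and K1: "K < 1"
    using A1 unfolding assumption1_def by (auto simp: min_def split: if_splits)
  have muh: "\<mu> < 1/2" using muK muK1 by linarith
  have D: "(w,m) \<in> dom_D K \<longleftrightarrow> 0 < w \<and> w < 1 \<and> 0 < m \<and> m < K" for w m
    unfolding dom_D_def by auto
  have ws0: "0 < ws" "ws < 1" "0 < ms" "ms < K" using star_in D by auto
  have wsmu: "ws > \<mu>" using L8[of ws \<mu> ms] ws0 muh star_w by force
  have msmu: "r*ms/K > \<mu>" using L9[of ms r K \<mu> ws] ws0 mur star_m by force
  have gws: "gW \<mu> ws = ms" using L1[OF wsmu, of ms] star_w wsmu by simp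
  have hms: "hM r K \<mu> ms = ws" using L2[OF msmu K0, of ws] star_m msmu by simp
  have c1: "Zm \<union> Zw \<subseteq> Dl \<union> Dr"
  proof
    fix p assume p: "p \<in> Zm \<union> Zw"
    obtain w m where pw: "p = (w,m)" by fastforce
    have wm: "0 < w" "w < 1" "0 < m" "m < K" using p pw D unfolding Zm_def Zw_def by auto
    show "p \<in> Dl \<union> Dr"
    proof (cases "p \<in> Zw")
      case True
      then have fw: "f_w \<mu> w m = 0" using pw Zw_def by auto
      have wmu: "w > \<mu>" using L8[of w \<mu> m] wm muh fw by force
      have g: "gW \<mu> w = m" using L1[OF wmu, of m] fw wmu by simp
      show ?thesis
      proof (cases "w \<le> ws")
        case True
        then have "gW \<mu> ws \<le> gW \<mu> w" using L3[OF wmu True mu0 muh] by simp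
        then show ?thesis using True g gws pw wm D unfolding Dl_def by auto
      next
        case False
        then have "gW \<mu> w \<le> gW \<mu> ws" using L3[OF wsmu _ mu0 muh, of w] by simp
        then show ?thesis using False g gws pw wm D unfolding Dr_def by auto
      qed
    next
      case False
      then have fm: "f_m r K \<mu> w m = 0" using p pw Zm_def by auto
      have mmu: "r*m/K > \<mu>" using L9[of m r K \<mu> w] wm mur fm by force
      have h: "hM r K \<mu> m = w" using L2[OF mmu K0, of w] fm mmu by simp
      show ?thesis
      proof (cases "m \<le> ms")
        case True
        then have "hM r K \<mu> ms \<le> hM r K \<mu> m" using L4[OF mmu True K0 _ mur mu0] r1 by simp
        then show ?thesis using True h hms pw wm D unfolding Dr_def by auto
      next
        case False
        then have "hM r K \<mu> m \<le> hM r K \<mu> ms" using L4[OF msmu _ K0 _ mur mu0, of m] r1 by simp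
        then show ?thesis using False h hms pw wm D unfolding Dl_def by auto
      qed
    qed
  qed
  have c2: "Zw_neg \<inter> Dl \<subseteq> Zm_neg"
  proof
    fix p assume p: "p \<in> Zw_neg \<inter> Dl"
    obtain w m where pw: "p = (w,m)" by fastforce
    have wm: "0 < w" "w < 1" "0 < m" "m < K" "w \<le> ws" "ms \<le> m" "f_w \<mu> w m < 0"
      using p pw D unfolding Zw_neg_def Dl_def by auto
    have wmu: "w > \<mu>" using L8[of w \<mu> m] wm muh by force
    have gm: "gW \<mu> w < m" using L1[OF wmu, of m] wm wmu by (simp add: mult_less_0_iff)
    have gge: "gW \<mu> w \<ge> ms" using L3[OF wmu wm(5) mu0 muh] gws by simp
    define \<phi> where "\<phi> x = f_m r K \<mu> x (gW \<mu> x)" for x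
    have key: "\<phi> w \<le> 0"
    proof (rule ccontr)
      assume neg: "\<not> \<phi> w \<le> 0"
      have "w \<noteq> ws" using neg star_m gws unfolding \<phi>_def by auto
      then have wlt: "w < ws" using wm by simp
      have gK: "gW \<mu> w < K"
        using L5[of K r \<mu> w "gW \<mu> w"] K0 r1 wm(1) neg muh mu0 unfolding \<phi>_def by force
      define \<delta> where "\<delta> = min ((w-\<mu>)/2) (\<mu>*(1-2*\<mu>)/2)"
      have d0: "\<delta> > 0" using wmu mu0 muh unfolding \<delta>_def by simp
      have d1: "\<delta> \<le> \<mu>*(1-2*\<mu>)/2" "\<delta> \<le> (w-\<mu>)/2" unfolding \<delta>_def
        by (rule min.cobounded2, rule min.cobounded1)
      have d2: "\<delta> \<le> (1-2*\<mu>)/2"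
      proof -
        have "\<mu>*(1-2*\<mu>) \<le> 1*(1-2*\<mu>)" using mu0 muh by (intro mult_right_mono) auto
        then show ?thesis using d1(1) by linarith
      qed
      define w0 where "w0 = \<mu> + \<delta>"
      have w0: "\<mu> < w0" "w0 < w" using d0 d1 wmu unfolding w0_def by auto
      have num: "\<mu>*((1-2*\<mu>)/2) \<le> (\<mu>+\<delta>)*(1-2*\<mu>-\<delta>)"
        using d0 d2 mu0 muh by (intro mult_mono) auto
      have "K*\<delta> \<le> (\<mu>+\<delta>)*(1-2*\<mu>-\<delta>)"
      proof -
        have "K*\<delta> \<le> \<delta>" using K1 d0 by simp
        then show ?thesis using num d1(1) by simp
      qed
      then have "K \<le> gW \<mu> w0" unfolding gW_def w0_def using d0
        by (simp add: pos_le_divide_eq algebra_simps)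
      then have p0: "\<phi> w0 < 0" unfolding \<phi>_def using L5[of K r \<mu> w0 "gW \<mu> w0"] K0 r1 w0 mu0 muh by simp
      have nz: "\<And>x. x \<in> {w0..w} \<Longrightarrow> x - \<mu> \<noteq> 0" using w0(1) by auto
      have cont: "continuous_on {w0..w} \<phi>"
        unfolding \<phi>_def f_m_def gW_def using nz K0
        by (intro continuous_intros) auto
      obtain c where c: "w0 \<le> c" "c \<le> w" "\<phi> c = 0"
        using IVT'[of \<phi> w0 0 w] p0 neg cont w0 by auto
      have cmu: "c > \<mu>" using c w0 by simp
      have gc: "gW \<mu> c \<ge> gW \<mu> w" using L3[OF cmu c(2) mu0 muh] .
      show False
      proof (cases "gW \<mu> c \<ge> K")
        case True
        then show False using L5[OF K0 r1 _ _ True mu0, of c] c cmu mu0 muh unfolding \<phi>_def by simp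
      next
        case False
        have "0 < c" "c < 1" using cmu mu0 c wm by linarith+
        moreover have "0 < gW \<mu> c" "gW \<mu> c < K" using False gc gge ws0 by linarith+
        ultimately have dm: "(c, gW \<mu> c) \<in> dom_D K" unfolding dom_D_def by simp
        have fw0: "f_w \<mu> c (gW \<mu> c) = 0" using L1[OF cmu] by simp
        have "f_m r K \<mu> c (gW \<mu> c) = 0" using c(3) unfolding \<phi>_def .
        then have "c = ws" using star_unique[OF dm fw0] by blast
        then show False using c wlt by simp
      qed
    qed
    have "f_m r K \<mu> w m < 0"
    proof (rule L7[of K r \<mu> w "gW \<mu> w" m])
      show "f_m r K \<mu> w (gW \<mu> w) \<le> 0" using key unfolding \<phi>_def .
    qed (use K0 r1 mu0 wm gm gge ws0 in auto)
    then show "p \<in> Zm_neg" using pw wm D unfolding Zm_neg_def by auto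
  qed
  have c3: "Zm_neg \<inter> Dr \<subseteq> Zw_neg"
  proof
    fix p assume p: "p \<in> Zm_neg \<inter> Dr"
    obtain w m where pw: "p = (w,m)" by fastforce
    have wm: "0 < w" "w < 1" "0 < m" "m < K" "ws \<le> w" "m \<le> ms" "f_m r K \<mu> w m < 0"
      using p pw D unfolding Zm_neg_def Dr_def by auto
    have mmu: "r*m/K > \<mu>" using L9[of m r K \<mu> w] wm mur by force
    have hm: "hM r K \<mu> m < w" using L2[OF mmu K0, of w] wm mmu by (simp add: mult_less_0_iff)
    have hge: "hM r K \<mu> m \<ge> ws" using L4[OF mmu wm(6) K0 _ mur mu0] hms r1 by simp
    define \<psi> where "\<psi> x = f_w \<mu> (hM r K \<mu> x) x" for x
    have key: "\<psi> m \<le> 0"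
    proof (rule ccontr)
      assume neg: "\<not> \<psi> m \<le> 0"
      have "m \<noteq> ms" using neg star_w hms unfolding \<psi>_def by auto
      then have mlt: "m < ms" using wm by simp
      have h1: "hM r K \<mu> m < 1"
        using L6[OF mu0 _ wm(3), of "hM r K \<mu> m"] neg wm K1 unfolding \<psi>_def by force
      define s0 where "s0 = min ((r*m/K-\<mu>)/2) (min ((r-2*\<mu>)/2) (\<mu>*K*(r-2*\<mu>)/(2*r)))"
      have s0: "s0 > 0" using mmu mu0 mur K0 r1 unfolding s0_def by simp
      have s1: "s0 \<le> (r*m/K-\<mu>)/2" "s0 \<le> (r-2*\<mu>)/2" "s0 \<le> \<mu>*K*(r-2*\<mu>)/(2*r)"
        unfolding s0_def
        by (rule min.cobounded1, rule min.coboundedI2, rule min.cobounded1,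
            rule min.coboundedI2, rule min.cobounded2)
      define m0 where "m0 = (\<mu>+s0)*K/r"
      have rm0: "r*m0/K = \<mu> + s0" unfolding m0_def using K0 r1 by simp
      have m0mu: "r*m0/K > \<mu>" using rm0 s0 by simp
      have m0lt: "m0 < m"
      proof -
        have "\<mu> + s0 < r*m/K" proof -
          have gen: "\<mu> + s0 < X" if "s0 \<le> (X-\<mu>)/2" "\<mu> < X" for X::real using that by (simp add: field_simps)
          show ?thesis using gen[OF s1(1) mmu] .
        qed
        then have "r*m0/K < r*m/K" using rm0 by simp
        then have "r*m0 < r*m" using K0 by (simp add: divide_less_cancel)
        then show ?thesis using r1 by simp
      qed
      have m0pos: "m0 > 0" unfolding m0_def using mu0 s0 K0 r1 by simp
      have m0ge: "m0 \<ge> \<mu>*K/r" unfolding m0_def using s0 K0 r1 by (simp add: divide_right_mono)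
      have hh: "(r-2*\<mu>)/2 \<le> r-2*\<mu>-s0" using s1(2) by (simp add: field_simps)
      have num: "(\<mu>*K/r)*((r-2*\<mu>)/2) \<le> m0*(r-2*\<mu>-s0)"
      proof (rule mult_mono[OF m0ge hh])
        show "0 \<le> m0" using m0pos by simp
        show "0 \<le> (r-2*\<mu>)/2" using mur by simp
      qed
      have e1: "r-\<mu>-(\<mu>+s0) = r-2*\<mu>-s0" "\<mu>+s0-\<mu> = s0" by simp_all
      have "hM r K \<mu> m0 = m0*(r-2*\<mu>-s0)/s0" unfolding hM_def rm0 e1 ..
      moreover have "s0 \<le> m0*(r-2*\<mu>-s0)"
      proof -
        have "(\<mu>*K/r)*((r-2*\<mu>)/2) = \<mu>*K*(r-2*\<mu>)/(2*r)" by simp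
        then show ?thesis using num s1(3) by linarith
      qed
      ultimately have "1 \<le> hM r K \<mu> m0" using s0 by (simp add: pos_le_divide_eq)
      then have p0: "\<psi> m0 < 0" unfolding \<psi>_def using L6[OF mu0 _ m0pos] m0lt wm K1 by simp
      have cont: "continuous_on {m0..m} \<psi>"
      proof -
        have "\<And>x. x \<in> {m0..m} \<Longrightarrow> r*x/K - \<mu> \<noteq> 0"
        proof -
          fix x assume "x \<in> {m0..m}"
          then have "r*m0/K \<le> r*x/K" using K0 r1 by (simp add: divide_right_mono)
          then show "r*x/K - \<mu> \<noteq> 0" using m0mu by simp
        qed
        then show ?thesis unfolding \<psi>_def f_w_def hM_def using K0
          by (intro continuous_intros) auto
      qed
      obtain c where c: "m0 \<le> c" "c \<le> m" "\<psi> c = 0"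
        using IVT'[of \<psi> m0 0 m] p0 neg cont m0lt by auto
      have cmu: "r*c/K > \<mu>"
      proof -
        have "r*m0/K \<le> r*c/K" using c K0 r1 by (simp add: divide_right_mono)
        then show ?thesis using m0mu by simp
      qed
      have hc: "hM r K \<mu> c \<ge> hM r K \<mu> m" using L4[OF cmu c(2) K0 _ mur mu0] r1 by linarith
      show False
      proof (cases "hM r K \<mu> c \<ge> 1")
        case True
        then show False using L6[OF mu0 True, of c] c m0pos wm K1 m0lt unfolding \<psi>_def by linarith
      next
        case False
        have "0 < c" "c < K" using c m0pos wm mlt by linarith+
        moreover have "0 < hM r K \<mu> c" "hM r K \<mu> c < 1" using False hc hge ws0 by linarith+
        ultimately have dm: "(hM r K \<mu> c, c) \<in> dom_D K" unfolding dom_D_def by simp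
        have fm0: "f_m r K \<mu> (hM r K \<mu> c) c = 0" using L2[OF cmu K0, of "hM r K \<mu> c"] by simp
        have "f_w \<mu> (hM r K \<mu> c) c = 0" using c(3) unfolding \<psi>_def .
        then have "hM r K \<mu> c = ws \<and> c = ms" by (rule star_unique[OF dm _ fm0])
        then have "c = ms" by simp
        then show False using c mlt by simp
      qed
    qed
    have "f_w \<mu> w m < 0"
    proof (rule L7'[of \<mu> m "hM r K \<mu> m" w])
      show "f_w \<mu> (hM r K \<mu> m) m \<le> 0" using key unfolding \<psi>_def .
    qed (use mu0 wm hm hge ws0 in auto)
    then show "p \<in> Zw_neg" using pw wm D unfolding Zw_neg_def by auto
  qed
  show ?thesis using c1 c2 c3 by simp
qed

end
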